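(* Let $m\geq4$ be an integer and let $G$ be an $m$-free digraph. Then for every $v\in V(G)$ and every integer $k$ with $1\leq k\leq m-3$: $$p_k(v)=|E(N^+_{k+1}(v),N^+_{k+2}(v))|,\qquad q_k(v)\leq |\bar E(N^-_{k+1}(v),N^+_1(v))|,\qquad r_k(v)\leq|\bar E(N^-_1(v),N^-_{k+2}(v))|,$$ $$p'_k(v)\leq|\bar E(N^+_1(v),N^+_{k+2}(v))|,\qquad q'_k(v)\leq|\bar E(N^+_{k+1}(v),N^-_1(v))|,\qquad r'_k(v)=|E(N^-_{k+2}(v),N^-_{k+1}(v))|.$$
   Context: All digraphs are finite, without loops and without parallel edges. A digraph is $m$-free if it has no directed cycle of length at most $m$. For a vertex $v$ and $i\geq 0$, $N_i^+(v)$ is the set of vertices $u$ such that the shortest directed path from $v$ to $u$ has length exactly $i$, and $N_i^-(v)$ is the set of vertices $u$ such that the shortest directed path from $u$ to $v$ has length exactly $i$. For $A,B\subseteq V(G)$, $E(A,B)$ is the set of edges $(a,b)$ with $a\in A$, $b\in B$, and $\bar E(A,B)$ is the set of pairs $(a,b)\in A\times B$ with $a\neq b$ such that neither $(a,b)$ nor $(b,a)$ is an edge. A directed path $(v_0,\dots,v_k)$ consists of distinct vertices with $(v_i,v_{i+1})$ an edge for each $i$; its length is $k$. It is induced if every edge of $G$ with both ends in $\{v_0,\dots,v_k\}$ is one of the edges $(v_i,v_{i+1})$; it is a shortest induced directed path if it is induced and $v_k\in N_k^+(v_0)$. Let $\mathscr{P}(G)$ be the set of shortest induced directed paths of $G$.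 For an integer $k\geq1$ and $v\in V(G)$: $P_k(v)$ (resp. $Q_k(v)$, $R_k(v)$) is the set of triples $(x,y,z)$ of vertices for which there exist vertices $w_1,\dots,w_k$ with $(x,w_1,\dots,w_k,y,z)\in\mathscr{P}(G)$ and $x=v$ (resp. $y=v$, $z=v$). $P'_k(v)$ (resp. $Q'_k(v)$, $R'_k(v)$) is the set of triples $(x,y,z)$ for which there exist $w_1,\dots,w_k$ with $(x,y,w_1,\dots,w_k,z)\in\mathscr{P}(G)$ and $x=v$ (resp. $y=v$, $z=v$). Lowercase letters denote cardinalities: $p_k(v)=|P_k(v)|$, etc. *)

theory Defs
  imports Main
begin

definition digraph :: "'a set \<Rightarrow> ('a \<times> 'a) set \<Rightarrow> bool" where
  "digraph V E \<longleftrightarrow> finite V \<and> E \<subseteq> V \<times> V \<and> (\<forall>x. (x, x) \<notin> E)"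

text \<open>A directed path given as its vertex list (v_0,...,v_k): distinct vertices of V,
  consecutive ones joined by edges. Its length is length p - 1.\<close>
definition dpath :: "'a set \<Rightarrow> ('a \<times> 'a) set \<Rightarrow> 'a list \<Rightarrow> bool" where
  "dpath V E p \<longleftrightarrow> p \<noteq> [] \<and> set p \<subseteq> V \<and> distinct p \<and>
     (\<forall>i. Suc i < length p \<longrightarrow> (p ! i, p ! Suc i) \<in> E)"

definition dcycle :: "'a set \<Rightarrow> ('a \<times> 'a) set \<Rightarrow> 'a list \<Rightarrow> bool" where
  "dcycle V E c \<longleftrightarrow> dpath V E c \<and> (last c, hd c) \<in> E"

definition m_free :: "nat \<Rightarrow> 'a set \<Rightarrow> ('a \<times> 'a) set \<Rightarrow> bool" where
  "m_free m V E \<longleftrightarrow> \<not> (\<exists>c. dcycle V E c \<and> length c \<le> m)"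

definition has_path :: "'a set \<Rightarrow> ('a \<times> 'a) set \<Rightarrow> 'a \<Rightarrow> 'a \<Rightarrow> nat \<Rightarrow> bool" where
  "has_path V E u w i \<longleftrightarrow> (\<exists>p. dpath V E p \<and> hd p = u \<and> last p = w \<and> length p = Suc i)"

definition Nout :: "'a set \<Rightarrow> ('a \<times> 'a) set \<Rightarrow> nat \<Rightarrow> 'a \<Rightarrow> 'a set" where
  "Nout V E i v = {u. has_path V E v u i \<and> (\<forall>j<i. \<not> has_path V E v u j)}"

definition Nin :: "'a set \<Rightarrow> ('a \<times> 'a) set \<Rightarrow> nat \<Rightarrow> 'a \<Rightarrow> 'a set" where
  "Nin V E i v = {u. has_path V E u v i \<and> (\<forall>j<i. \<not> has_path V E u v j)}"

definition Eset :: "('a \<times> 'a) set \<Rightarrow> 'a set \<Rightarrow> 'a set \<Rightarrow> ('a \<times> 'a) set" where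
  "Eset E A B = {(a, b). (a, b) \<in> E \<and> a \<in> A \<and> b \<in> B}"

definition Ebar :: "('a \<times> 'a) set \<Rightarrow> 'a set \<Rightarrow> 'a set \<Rightarrow> ('a \<times> 'a) set" where
  "Ebar E A B = {(a, b). a \<in> A \<and> b \<in> B \<and> a \<noteq> b \<and> (a, b) \<notin> E \<and> (b, a) \<notin> E}"

definition induced_path :: "'a set \<Rightarrow> ('a \<times> 'a) set \<Rightarrow> 'a list \<Rightarrow> bool" where
  "induced_path V E p \<longleftrightarrow> dpath V E p \<and>
     (\<forall>i j. i < length p \<longrightarrow> j < length p \<longrightarrow> (p ! i, p ! j) \<in> E \<longrightarrow> j = Suc i)"

definition shortest_induced_path :: "'a set \<Rightarrow> ('a \<times> 'a) set \<Rightarrow> 'a list \<Rightarrow> bool" where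
  "shortest_induced_path V E p \<longleftrightarrow> induced_path V E p \<and>
     last p \<in> Nout V E (length p - 1) (hd p)"

definition Pk :: "'a set \<Rightarrow> ('a \<times> 'a) set \<Rightarrow> nat \<Rightarrow> 'a \<Rightarrow> ('a \<times> 'a \<times> 'a) set" where
  "Pk V E k v = {(x, y, z). (\<exists>ws. length ws = k \<and> shortest_induced_path V E (x # ws @ [y, z])) \<and> x = v}"
definition Qk :: "'a set \<Rightarrow> ('a \<times> 'a) set \<Rightarrow> nat \<Rightarrow> 'a \<Rightarrow> ('a \<times> 'a \<times> 'a) set" where
  "Qk V E k v = {(x, y, z). (\<exists>ws. length ws = k \<and> shortest_induced_path V E (x # ws @ [y, z])) \<and> y = v}"
definition Rk :: "'a set \<Rightarrow> ('a \<times> 'a) set \<Rightarrow> nat \<Rightarrow> 'a \<Rightarrow> ('a \<times> 'a \<times> 'a) set" where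
  "Rk V E k v = {(x, y, z). (\<exists>ws. length ws = k \<and> shortest_induced_path V E (x # ws @ [y, z])) \<and> z = v}"
definition Pk' :: "'a set \<Rightarrow> ('a \<times> 'a) set \<Rightarrow> nat \<Rightarrow> 'a \<Rightarrow> ('a \<times> 'a \<times> 'a) set" where
  "Pk' V E k v = {(x, y, z). (\<exists>ws. length ws = k \<and> shortest_induced_path V E (x # y # ws @ [z])) \<and> x = v}"
definition Qk' :: "'a set \<Rightarrow> ('a \<times> 'a) set \<Rightarrow> nat \<Rightarrow> 'a \<Rightarrow> ('a \<times> 'a \<times> 'a) set" where
  "Qk' V E k v = {(x, y, z). (\<exists>ws. length ws = k \<and> shortest_induced_path V E (x # y # ws @ [z])) \<and> y = v}"
definition Rk' :: "'a set \<Rightarrow> ('a \<times> 'a) set \<Rightarrow> nat \<Rightarrow> 'a \<Rightarrow> ('a \<times> 'a \<times> 'a) set" where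
  "Rk' V E k v = {(x, y, z). (\<exists>ws. length ws = k \<and> shortest_induced_path V E (x # y # ws @ [z])) \<and> z = v}"

end

theory Submission
  imports Defs
begin

lemma dpath_take: "dpath V E p \<Longrightarrow> 0 < n \<Longrightarrow> dpath V E (take n p)"
  unfolding dpath_def by (auto dest: in_set_takeD)

lemma dpath_drop: "dpath V E p \<Longrightarrow> n < length p \<Longrightarrow> dpath V E (drop n p)"
  unfolding dpath_def
proof (intro conjI allI impI)
  assume a: "p \<noteq> [] \<and> set p \<subseteq> V \<and> distinct p \<and> (\<forall>i. Suc i < length p \<longrightarrow> (p ! i, p ! Suc i) \<in> E)"
    and n: "n < length p"
  show "drop n p \<noteq> []" using n by simp
  show "set (drop n p) \<subseteq> V" using a by (meson order_trans set_drop_subset)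
  show "distinct (drop n p)" using a by simp
  fix i assume "Suc i < length (drop n p)"
  then have "Suc (n+i) < length p" by simp
  then have "(p ! (n+i), p ! Suc (n+i)) \<in> E" using a by blast
  then show "(drop n p ! i, drop n p ! Suc i) \<in> E" using n by simp
qed

lemma S1:
  assumes "dpath V E p" "i \<le> j" "j < length p"
  shows "has_path V E (p!i) (p!j) (j-i)"
proof -
  let ?q = "drop i (take (Suc j) p)"
  have t: "dpath V E (take (Suc j) p)" using dpath_take[OF assms(1)] by simp
  have lt: "length (take (Suc j) p) = Suc j" using assms by simp
  have q: "dpath V E ?q" using dpath_drop[OF t] lt assms by simp
  have "hd ?q = p!i" using assms lt by (simp add: hd_drop_conv_nth)
  moreover have "last ?q = p!j" using assms lt by (simp add: last_conv_nth)
  moreover have "length ?q = Suc (j-i)" using assms by simp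
  ultimately show ?thesis using q unfolding has_path_def by blast
qed

lemma hp_Suc:
  assumes "has_path V E w z (Suc b)"
  shows "\<exists>w2. (w,w2) \<in> E \<and> has_path V E w2 z b"
proof -
  obtain p where p: "dpath V E p" "hd p = w" "last p = z" "length p = Suc (Suc b)"
    using assms unfolding has_path_def by blast
  have "(p!0, p!1) \<in> E" using p unfolding dpath_def by auto
  moreover have "p!0 = w" using p by (cases p) auto
  moreover have "has_path V E (p!1) (p!(Suc b)) b" using S1[OF p(1), of 1 "Suc b"] p by simp
  moreover have "p!(Suc b) = z" using p last_conv_nth[of p] by (cases p) auto
  ultimately show ?thesis by auto
qed

lemma hp_0: "has_path V E w z 0 \<Longrightarrow> w = z"
  unfolding has_path_def by (metis Suc_length_conv hd_Cons_tl last_ConsL length_0_conv list.sel(1))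

lemma hp_edge:
  assumes "has_path V E u w a" "(w,z) \<in> E" "digraph V E"
  shows "\<exists>c\<le>Suc a. has_path V E u z c"
proof -
  obtain p where p: "dpath V E p" "hd p = u" "last p = w" "length p = Suc a"
    using assms unfolding has_path_def by blast
  show ?thesis
  proof (cases "z \<in> set p")
    case True
    then obtain j where j: "j < length p" "p!j = z" by (metis in_set_conv_nth)
    have "has_path V E (p!0) (p!j) (j-0)" using S1[OF p(1), of 0 j] j by simp
    moreover have "p!0 = u" using p by (cases p) auto
    ultimately show ?thesis using j p by (intro exI[of _ j]) auto
  next
    case False
    have zV: "z \<in> V" using assms(2,3) unfolding digraph_def by auto
    have "dpath V E (p @ [z])"
      unfolding dpath_def
    proof (intro conjI allI impI)
      show "p @ [z] \<noteq> []" by simp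
      show "set (p @ [z]) \<subseteq> V" using p(1) zV unfolding dpath_def by auto
      show "distinct (p @ [z])" using p(1) False unfolding dpath_def by simp
      fix i assume i: "Suc i < length (p @ [z])"
      show "((p @ [z]) ! i, (p @ [z]) ! Suc i) \<in> E"
      proof (cases "Suc i < length p")
        case True
        then have "(p!i, p!Suc i) \<in> E" using p(1) unfolding dpath_def by blast
        then show ?thesis using True by (simp add: nth_append)
      next
        case False
        then have si: "Suc i = length p" using i by simp
        have "p \<noteq> []" using si by auto
        then have "(p @ [z]) ! i = w" using si p last_conv_nth[of p] by (simp add: nth_append)
        moreover have "(p @ [z]) ! Suc i = z" using si by (simp add: nth_append)
        ultimately show ?thesis using assms(2) by simp
      qed
    qed
    moreover have "hd (p @ [z]) = u" using p by (cases p) auto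
    ultimately have "has_path V E u z (Suc a)" unfolding has_path_def using p
      by (intro exI[of _ "p @ [z]"]) auto
    then show ?thesis by blast
  qed
qed

lemma triangle:
  assumes "has_path V E w z b" "has_path V E u w a" "digraph V E"
  shows "\<exists>c \<le> a+b. has_path V E u z c"
  using assms
proof (induction b arbitrary: w a)
  case 0
  then show ?case using hp_0 by fastforce
next
  case (Suc b)
  obtain w2 where w2: "(w,w2) \<in> E" "has_path V E w2 z b" using hp_Suc[OF Suc.prems(1)] by blast
  obtain c' where c': "c' \<le> Suc a" "has_path V E u w2 c'" using hp_edge[OF Suc.prems(2) w2(1) Suc.prems(3)] by blast
  obtain c where "c \<le> c' + b" "has_path V E u z c" using Suc.IH[OF w2(2) c'(2) Suc.prems(3)] by blast
  then show ?case using c' by (intro exI[of _ c]) auto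
qed

lemma hp_1: "(a,b) \<in> E \<Longrightarrow> digraph V E \<Longrightarrow> has_path V E a b 1"
  unfolding has_path_def digraph_def dpath_def
  by (rule exI[of _ "[a,b]"]) (auto simp: nth_Cons split: nat.splits)

lemma shortest_sub:
  assumes P: "dpath V E P" "last P \<in> Nout V E (length P - 1) (hd P)" and g: "digraph V E"
    and ij: "i \<le> j" "j < length P"
  shows "P!j \<in> Nout V E (j-i) (P!i)"
proof -
  have ne: "P \<noteq> []" using P unfolding dpath_def by simp
  have hd: "hd P = P!0" using ne by (simp add: hd_conv_nth)
  have lst: "last P = P!(length P - 1)" using ne by (simp add: last_conv_nth)
  have "\<not> has_path V E (P!i) (P!j) c" if c: "c < j - i" for c
  proof
    assume h: "has_path V E (P!i) (P!j) c"
    have h0: "has_path V E (P!0) (P!i) (i - 0)" using S1[OF P(1), of 0 i] ij by simp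
    obtain c1 where c1: "c1 \<le> i + c" "has_path V E (P!0) (P!j) c1"
      using triangle[OF h _ g, of "P!0" i] h0 by auto
    have h2: "has_path V E (P!j) (P!(length P - 1)) (length P - 1 - j)" using S1[OF P(1), of j "length P - 1"] ij by simp
    obtain c2 where c2: "c2 \<le> c1 + (length P - 1 - j)" "has_path V E (P!0) (P!(length P - 1)) c2"
      using triangle[OF h2 c1(2) g] by auto
    have "c2 < length P - 1" using c1 c2 c ij by linarith
    then show False using P(2) c2 hd lst unfolding Nout_def by auto
  qed
  then show ?thesis using S1[OF P(1) ij] unfolding Nout_def by auto
qed

lemma induced_of_shortest:
  assumes g: "digraph V E" and mf: "m_free m V E" and P: "dpath V E P"
    "last P \<in> Nout V E (length P - 1) (hd P)" and len: "length P \<le> m"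
  shows "induced_path V E P"
  unfolding induced_path_def
proof (intro conjI allI impI)
  show "dpath V E P" by fact
  fix i j assume i: "i < length P" and j: "j < length P" and e: "(P!i, P!j) \<in> E"
  consider "i = j" | "i < j" | "j < i" by linarith
  then show "j = Suc i"
  proof cases
    case 1 then show ?thesis using e g unfolding digraph_def by auto
  next
    case 2
    have "P!j \<in> Nout V E (j-i) (P!i)" using shortest_sub[OF P g, of i j] 2 j by simp
    moreover have "has_path V E (P!i) (P!j) 1" using hp_1[OF e g] .
    ultimately have "\<not> 1 < j - i" unfolding Nout_def by auto
    then show ?thesis using 2 by linarith
  next
    case 3
    obtain c where c: "dpath V E c" "hd c = P!j" "last c = P!i" "length c = Suc (i-j)"
      using S1[OF P(1), of j i] 3 i unfolding has_path_def by auto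
    have "dcycle V E c" using c e unfolding dcycle_def by simp
    moreover have "length c \<le> m" using c i len 3 by linarith
    ultimately show ?thesis using mf unfolding m_free_def by blast
  qed
qed


lemma dpath_snoc:
  assumes "dpath V E p" "z \<notin> set p" "z \<in> V" "(last p, z) \<in> E"
  shows "dpath V E (p @ [z])"
  unfolding dpath_def
proof (intro conjI allI impI)
  show "p @ [z] \<noteq> []" by simp
  show "set (p @ [z]) \<subseteq> V" using assms unfolding dpath_def by auto
  show "distinct (p @ [z])" using assms unfolding dpath_def by simp
  fix i assume i: "Suc i < length (p @ [z])"
  show "((p @ [z]) ! i, (p @ [z]) ! Suc i) \<in> E"
  proof (cases "Suc i < length p")
    case True
    then have "(p!i, p!Suc i) \<in> E" using assms(1) unfolding dpath_def by blast
    then show ?thesis using True by (simp add: nth_append)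
  next
    case False
    then have si: "Suc i = length p" using i by simp
    have "p \<noteq> []" using si by auto
    moreover have "i = length p - 1" using si by simp
    ultimately have "(p @ [z]) ! i = last p" using last_conv_nth[of p] by (simp add: nth_append)
    moreover have "(p @ [z]) ! Suc i = z" using si by (simp add: nth_append)
    ultimately show ?thesis using assms(4) by simp
  qed
qed

lemma dpath_cons:
  assumes "dpath V E p" "x \<notin> set p" "x \<in> V" "(x, hd p) \<in> E"
  shows "dpath V E (x # p)"
  unfolding dpath_def
proof (intro conjI allI impI)
  have ne: "p \<noteq> []" using assms unfolding dpath_def by simp
  show "x # p \<noteq> []" by simp
  show "set (x # p) \<subseteq> V" using assms unfolding dpath_def by auto
  show "distinct (x # p)" using assms unfolding dpath_def by simp
  fix i assume i: "Suc i < length (x # p)"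
  show "((x # p) ! i, (x # p) ! Suc i) \<in> E"
  proof (cases i)
    case 0
    then show ?thesis using assms(4) ne by (simp add: hd_conv_nth)
  next
    case (Suc i')
    then have "Suc i' < length p" using i by simp
    then have "(p!i', p!Suc i') \<in> E" using assms(1) unfolding dpath_def by blast
    then show ?thesis using Suc by simp
  qed
qed

lemma decomp:
  assumes "length p = Suc (Suc k)"
  shows "p = hd p # take k (tl p) @ [last p]"
proof (cases p)
  case Nil then show ?thesis using assms by simp
next
  case (Cons a q)
  then have lq: "length q = Suc k" using assms by simp
  then have "q \<noteq> []" by auto
  then have "q = butlast q @ [last q]" by simp
  moreover have "butlast q = take k q" using lq by (simp add: butlast_conv_take)
  ultimately show ?thesis using Cons \<open>q \<noteq> []\<close> by simp
qed

lemma Nin_iff: "u \<in> Nin V E i w \<longleftrightarrow> w \<in> Nout V E i u"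
  unfolding Nin_def Nout_def by simp

lemma hp_V: "has_path V E u w i \<Longrightarrow> u \<in> V \<and> w \<in> V"
  unfolding has_path_def dpath_def by (metis hd_in_set last_in_set subsetD)

lemma Nout_V: "Nout V E i u \<subseteq> V"
  unfolding Nout_def using hp_V by fast

lemma Nin_V: "Nin V E i u \<subseteq> V"
  unfolding Nin_def using hp_V by fast

lemma fin_Ebar: "finite V \<Longrightarrow> A \<subseteq> V \<Longrightarrow> B \<subseteq> V \<Longrightarrow> finite (Ebar E A B)"
  unfolding Ebar_def by (rule finite_subset[of _ "V \<times> V"]) auto

lemma fin_Eset: "finite V \<Longrightarrow> A \<subseteq> V \<Longrightarrow> B \<subseteq> V \<Longrightarrow> finite (Eset E A B)"
  unfolding Eset_def by (rule finite_subset[of _ "V \<times> V"]) auto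

lemma sip_sub: "shortest_induced_path V E P \<Longrightarrow> digraph V E \<Longrightarrow> i \<le> j \<Longrightarrow> j < length P
   \<Longrightarrow> P!j \<in> Nout V E (j-i) (P!i)"
  unfolding shortest_induced_path_def induced_path_def using shortest_sub by blast

lemma sip_ind: "shortest_induced_path V E P \<Longrightarrow> i < length P \<Longrightarrow> j < length P
   \<Longrightarrow> (P!i, P!j) \<in> E \<Longrightarrow> j = Suc i"
  unfolding shortest_induced_path_def induced_path_def by blast

lemma sip_dist: "shortest_induced_path V E P \<Longrightarrow> i < length P \<Longrightarrow> j < length P
   \<Longrightarrow> i \<noteq> j \<Longrightarrow> P!i \<noteq> P!j"
  unfolding shortest_induced_path_def induced_path_def dpath_def by (simp add: nth_eq_iff_index_eq)

lemma sip_edge: "shortest_induced_path V E P \<Longrightarrow> Suc i < length P \<Longrightarrow> (P!i, P!Suc i) \<in> E"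
  unfolding shortest_induced_path_def induced_path_def dpath_def by blast

lemma facts1:
  assumes s: "shortest_induced_path V E (x # ws @ [y, z])" and l: "length ws = k" and g: "digraph V E"
  shows "y \<in> Nout V E (k+1) x" "z \<in> Nout V E 1 y" "z \<in> Nout V E (k+2) x" "(y,z) \<in> E"
    "x \<noteq> z" "x \<noteq> y" "(x,z) \<notin> E" "(z,x) \<notin> E" "1 \<le> k \<Longrightarrow> (x,y) \<notin> E" "(y,x) \<notin> E"
proof -
  let ?P = "x # ws @ [y, z]"
  have len: "length ?P = k+3" using l by simp
  have p0: "?P!0 = x" by simp
  have p1: "?P!(k+1) = y" using l by (simp add: nth_append)
  have p2: "?P!(k+2) = z" using l by (simp add: nth_append)
  show "y \<in> Nout V E (k+1) x" using sip_sub[OF s g, of 0 "k+1"] len unfolding p0 p1 by simp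
  show "z \<in> Nout V E 1 y" using sip_sub[OF s g, of "k+1" "k+2"] len unfolding p2 p1 by simp
  show "z \<in> Nout V E (k+2) x" using sip_sub[OF s g, of 0 "k+2"] len unfolding p0 p2 by simp
  show "(y,z) \<in> E" using sip_edge[OF s, of "k+1"] len l by (simp add: nth_append)
  show "x \<noteq> z" using sip_dist[OF s, of 0 "k+2"] len unfolding p0 p2 by simp
  show "x \<noteq> y" using sip_dist[OF s, of 0 "k+1"] len unfolding p0 p1 by simp
  show "(x,z) \<notin> E" using sip_ind[OF s, of 0 "k+2"] len unfolding p0 p2 by auto
  show "(z,x) \<notin> E" using sip_ind[OF s, of "k+2" 0] len unfolding p0 p2 by auto
  show "1 \<le> k \<Longrightarrow> (x,y) \<notin> E"
  proof
    assume k1: "1 \<le> k" and e: "(x,y) \<in> E"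
    have "(?P!0, ?P!(k+1)) \<in> E" using e by (simp only: p0 p1)
    then have "k+1 = Suc 0" using sip_ind[OF s, of 0 "k+1"] len by linarith
    then show False using k1 by simp
  qed
  show "(y,x) \<notin> E"
  proof
    assume e: "(y,x) \<in> E"
    have "(?P!(k+1), ?P!0) \<in> E" using e by (simp only: p0 p1)
    then have "0 = Suc (k+1)" using sip_ind[OF s, of "k+1" 0] len by linarith
    then show False by simp
  qed
qed

lemma facts2:
  assumes s: "shortest_induced_path V E (x # y # ws @ [z])" and l: "length ws = k" and g: "digraph V E"
  shows "y \<in> Nout V E 1 x" "z \<in> Nout V E (k+1) y" "z \<in> Nout V E (k+2) x" "(x,y) \<in> E"
    "x \<noteq> z" "y \<noteq> z" "(x,z) \<notin> E" "(z,x) \<notin> E" "1 \<le> k \<Longrightarrow> (y,z) \<notin> E" "(z,y) \<notin> E"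
proof -
  let ?P = "x # y # ws @ [z]"
  have len: "length ?P = k+3" using l by simp
  have p0: "?P!0 = x" by simp
  have p1: "?P!1 = y" by simp
  have p2: "?P!(k+2) = z" using l by (simp add: nth_append)
  show "y \<in> Nout V E 1 x" using sip_sub[OF s g, of 0 1] len unfolding p0 p1 by simp
  show "z \<in> Nout V E (k+1) y" using sip_sub[OF s g, of 1 "k+2"] len unfolding p2 p1 by simp
  show "z \<in> Nout V E (k+2) x" using sip_sub[OF s g, of 0 "k+2"] len unfolding p0 p2 by simp
  show "(x,y) \<in> E" using sip_edge[OF s, of 0] len unfolding p1 p0 by simp
  show "x \<noteq> z" using sip_dist[OF s, of 0 "k+2"] len unfolding p0 p2 by simp
  show "y \<noteq> z" using sip_dist[OF s, of 1 "k+2"] len unfolding p1 p2 by simp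
  show "(x,z) \<notin> E" using sip_ind[OF s, of 0 "k+2"] len unfolding p0 p2 by auto
  show "(z,x) \<notin> E" using sip_ind[OF s, of "k+2" 0] len unfolding p0 p2 by auto
  show "1 \<le> k \<Longrightarrow> (y,z) \<notin> E" using sip_ind[OF s, of 1 "k+2"] len unfolding p1 p2 by auto
  show "(z,y) \<notin> E" using sip_ind[OF s, of "k+2" 1] len unfolding p1 p2 by auto
qed


lemma part_P:
  assumes g: "digraph V E" and mf: "m_free m V E" and km: "k+3 \<le> m"
  shows "card (Pk V E k v) = card (Eset E (Nout V E (k+1) v) (Nout V E (k+2) v))"
proof -
  let ?f = "\<lambda>(x::'a,y::'a,z::'a). (y,z)"
  have inj: "inj_on ?f (Pk V E k v)" unfolding inj_on_def Pk_def by auto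
  have "?f ` Pk V E k v = Eset E (Nout V E (k+1) v) (Nout V E (k+2) v)"
  proof
    show "?f ` Pk V E k v \<subseteq> Eset E (Nout V E (k+1) v) (Nout V E (k+2) v)"
    proof
      fix t assume "t \<in> ?f ` Pk V E k v"
      then obtain y z ws where t: "t = (y,z)" "length ws = k" "shortest_induced_path V E (v # ws @ [y,z])"
        unfolding Pk_def by auto
      show "t \<in> Eset E (Nout V E (k+1) v) (Nout V E (k+2) v)"
        using facts1[OF t(3) t(2) g] t(1) unfolding Eset_def by simp
    qed
    show "Eset E (Nout V E (k+1) v) (Nout V E (k+2) v) \<subseteq> ?f ` Pk V E k v"
    proof
      fix t assume "t \<in> Eset E (Nout V E (k+1) v) (Nout V E (k+2) v)"
      then obtain y z where t: "t = (y,z)" "(y,z) \<in> E" "y \<in> Nout V E (k+1) v" "z \<in> Nout V E (k+2) v"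
        unfolding Eset_def by auto
      obtain p where p: "dpath V E p" "hd p = v" "last p = y" "length p = Suc (k+1)"
        using t(3) unfolding Nout_def has_path_def by auto
      have zn: "z \<notin> set p"
      proof
        assume "z \<in> set p"
        then obtain j where j: "j < length p" "p!j = z" by (metis in_set_conv_nth)
        have "has_path V E (p!0) (p!j) (j-0)" using S1[OF p(1), of 0 j] j by simp
        moreover have "p!0 = v" using p by (cases p) auto
        ultimately have "has_path V E v z j" using j by simp
        then show False using t(4) j p unfolding Nout_def by auto
      qed
      have zV: "z \<in> V" using t(2) g unfolding digraph_def by auto
      let ?P = "p @ [z]"
      have dp: "dpath V E ?P" using dpath_snoc[OF p(1) zn zV] t(2) p(3) by simp
      have hdP: "hd ?P = v" using p by (cases p) auto
      have lP: "length ?P = k+3" using p by simp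
      have sh: "last ?P \<in> Nout V E (length ?P - 1) (hd ?P)" using hdP lP t(4) by simp
      have ind: "induced_path V E ?P" using induced_of_shortest[OF g mf dp sh] lP km by simp
      obtain ws where ws: "p = v # ws @ [y]" "length ws = k"
        using decomp[of p k] p by (intro that[of "take k (tl p)"]) auto
      have PE: "?P = v # ws @ [y, z]" using ws by simp
      have "shortest_induced_path V E (v # ws @ [y, z])"
        using ind sh unfolding shortest_induced_path_def PE by simp
      then have "(v,y,z) \<in> Pk V E k v" unfolding Pk_def using ws(2) by auto
      then show "t \<in> ?f ` Pk V E k v" using t(1) by (intro rev_image_eqI[of "(v,y,z)"]) auto
    qed
  qed
  then show ?thesis using card_image[OF inj] by simp
qed

lemma part_R':
  assumes g: "digraph V E" and mf: "m_free m V E" and km: "k+3 \<le> m"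
  shows "card (Rk' V E k v) = card (Eset E (Nin V E (k+2) v) (Nin V E (k+1) v))"
proof -
  let ?f = "\<lambda>(x::'a,y::'a,z::'a). (x,y)"
  have inj: "inj_on ?f (Rk' V E k v)" unfolding inj_on_def Rk'_def by auto
  have "?f ` Rk' V E k v = Eset E (Nin V E (k+2) v) (Nin V E (k+1) v)"
  proof
    show "?f ` Rk' V E k v \<subseteq> Eset E (Nin V E (k+2) v) (Nin V E (k+1) v)"
    proof
      fix t assume "t \<in> ?f ` Rk' V E k v"
      then obtain x y ws where t: "t = (x,y)" "length ws = k" "shortest_induced_path V E (x # y # ws @ [v])"
        unfolding Rk'_def by auto
      show "t \<in> Eset E (Nin V E (k+2) v) (Nin V E (k+1) v)"
        using facts2[OF t(3) t(2) g] t(1) unfolding Eset_def Nin_iff by simp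
    qed
    show "Eset E (Nin V E (k+2) v) (Nin V E (k+1) v) \<subseteq> ?f ` Rk' V E k v"
    proof
      fix t assume "t \<in> Eset E (Nin V E (k+2) v) (Nin V E (k+1) v)"
      then obtain x y where t: "t = (x,y)" "(x,y) \<in> E" "v \<in> Nout V E (k+2) x" "v \<in> Nout V E (k+1) y"
        unfolding Eset_def Nin_iff by auto
      obtain p where p: "dpath V E p" "hd p = y" "last p = v" "length p = Suc (k+1)"
        using t(4) unfolding Nout_def has_path_def by auto
      have xn: "x \<notin> set p"
      proof
        assume "x \<in> set p"
        then obtain j where j: "j < length p" "p!j = x" by (metis in_set_conv_nth)
        have "has_path V E (p!j) (p!(k+1)) (k+1-j)" using S1[OF p(1), of j "k+1"] j p by simp
        moreover have "p!(k+1) = v" using p last_conv_nth[of p] by (cases p) auto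
        ultimately have "has_path V E x v (k+1-j)" using j by simp
        then show False using t(3) j p unfolding Nout_def by auto
      qed
      have xV: "x \<in> V" using t(2) g unfolding digraph_def by auto
      let ?P = "x # p"
      have dp: "dpath V E ?P" using dpath_cons[OF p(1) xn xV] t(2) p(2) by simp
      have lP: "length ?P = k+3" using p by simp
      have lst: "last ?P = v" using p by (cases p) auto
      have sh: "last ?P \<in> Nout V E (length ?P - 1) (hd ?P)" using lst lP t(3) by simp
      have ind: "induced_path V E ?P" using induced_of_shortest[OF g mf dp sh] lP km by simp
      obtain ws where ws: "p = y # ws @ [v]" "length ws = k"
        using decomp[of p k] p by (intro that[of "take k (tl p)"]) auto
      have PE: "?P = x # y # ws @ [v]" using ws by simp
      have "shortest_induced_path V E (x # y # ws @ [v])"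
        using ind sh unfolding shortest_induced_path_def PE by simp
      then have "(x,y,v) \<in> Rk' V E k v" unfolding Rk'_def using ws(2) by auto
      then show "t \<in> ?f ` Rk' V E k v" using t(1) by (intro rev_image_eqI[of "(x,y,v)"]) auto
    qed
  qed
  then show ?thesis using card_image[OF inj] by simp
qed

lemma part_Q:
  assumes g: "digraph V E"
  shows "card (Qk V E k v) \<le> card (Ebar E (Nin V E (k+1) v) (Nout V E 1 v))"
proof (rule card_inj_on_le[where f="\<lambda>(x,y,z). (x,z)"])
  show "inj_on (\<lambda>(x,y,z). (x,z)) (Qk V E k v)" unfolding inj_on_def Qk_def by auto
  show "finite (Ebar E (Nin V E (k+1) v) (Nout V E 1 v))"
    using g fin_Ebar Nin_V Nout_V unfolding digraph_def by metis
  show "(\<lambda>(x,y,z). (x,z)) ` Qk V E k v \<subseteq> Ebar E (Nin V E (k+1) v) (Nout V E 1 v)"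
  proof
    fix t assume "t \<in> (\<lambda>(x,y,z). (x,z)) ` Qk V E k v"
    then obtain x z ws where t: "t = (x,z)" "length ws = k" "shortest_induced_path V E (x # ws @ [v,z])"
      unfolding Qk_def by auto
    show "t \<in> Ebar E (Nin V E (k+1) v) (Nout V E 1 v)"
      using facts1[OF t(3) t(2) g] t(1) unfolding Ebar_def Nin_iff by simp
  qed
qed

lemma part_R:
  assumes g: "digraph V E" and k: "1 \<le> k"
  shows "card (Rk V E k v) \<le> card (Ebar E (Nin V E 1 v) (Nin V E (k+2) v))"
proof (rule card_inj_on_le[where f="\<lambda>(x,y,z). (y,x)"])
  show "inj_on (\<lambda>(x,y,z). (y,x)) (Rk V E k v)" unfolding inj_on_def Rk_def by auto
  show "finite (Ebar E (Nin V E 1 v) (Nin V E (k+2) v))"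
    using g fin_Ebar Nin_V unfolding digraph_def by metis
  show "(\<lambda>(x,y,z). (y,x)) ` Rk V E k v \<subseteq> Ebar E (Nin V E 1 v) (Nin V E (k+2) v)"
  proof
    fix t assume "t \<in> (\<lambda>(x,y,z). (y,x)) ` Rk V E k v"
    then obtain x y ws where t: "t = (y,x)" "length ws = k" "shortest_induced_path V E (x # ws @ [y,v])"
      unfolding Rk_def by auto
    show "t \<in> Ebar E (Nin V E 1 v) (Nin V E (k+2) v)"
      using facts1[OF t(3) t(2) g] t(1) k unfolding Ebar_def Nin_iff by auto
  qed
qed

lemma part_P':
  assumes g: "digraph V E" and k: "1 \<le> k"
  shows "card (Pk' V E k v) \<le> card (Ebar E (Nout V E 1 v) (Nout V E (k+2) v))"
proof (rule card_inj_on_le[where f="\<lambda>(x,y,z). (y,z)"])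
  show "inj_on (\<lambda>(x,y,z). (y,z)) (Pk' V E k v)" unfolding inj_on_def Pk'_def by auto
  show "finite (Ebar E (Nout V E 1 v) (Nout V E (k+2) v))"
    using g fin_Ebar Nout_V unfolding digraph_def by metis
  show "(\<lambda>(x,y,z). (y,z)) ` Pk' V E k v \<subseteq> Ebar E (Nout V E 1 v) (Nout V E (k+2) v)"
  proof
    fix t assume "t \<in> (\<lambda>(x,y,z). (y,z)) ` Pk' V E k v"
    then obtain y z ws where t: "t = (y,z)" "length ws = k" "shortest_induced_path V E (v # y # ws @ [z])"
      unfolding Pk'_def by auto
    show "t \<in> Ebar E (Nout V E 1 v) (Nout V E (k+2) v)"
      using facts2[OF t(3) t(2) g] t(1) k unfolding Ebar_def by auto
  qed
qed

lemma part_Q':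
  assumes g: "digraph V E"
  shows "card (Qk' V E k v) \<le> card (Ebar E (Nout V E (k+1) v) (Nin V E 1 v))"
proof (rule card_inj_on_le[where f="\<lambda>(x,y,z). (z,x)"])
  show "inj_on (\<lambda>(x,y,z). (z,x)) (Qk' V E k v)" unfolding inj_on_def Qk'_def by auto
  show "finite (Ebar E (Nout V E (k+1) v) (Nin V E 1 v))"
    using g fin_Ebar Nin_V Nout_V unfolding digraph_def by metis
  show "(\<lambda>(x,y,z). (z,x)) ` Qk' V E k v \<subseteq> Ebar E (Nout V E (k+1) v) (Nin V E 1 v)"
  proof
    fix t assume "t \<in> (\<lambda>(x,y,z). (z,x)) ` Qk' V E k v"
    then obtain x z ws where t: "t = (z,x)" "length ws = k" "shortest_induced_path V E (x # v # ws @ [z])"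
      unfolding Qk'_def by auto
    show "t \<in> Ebar E (Nout V E (k+1) v) (Nin V E 1 v)"
      using facts2[OF t(3) t(2) g] t(1) unfolding Ebar_def Nin_iff by auto
  qed
qed

theorem lemma2p3:
  fixes V :: "'a set" and E :: "('a \<times> 'a) set" and m k :: nat and v :: 'a
  assumes "m \<ge> 4" and "digraph V E" and "m_free m V E"
    and "v \<in> V" and "1 \<le> k" and "k \<le> m - 3"
  shows "card (Pk V E k v) = card (Eset E (Nout V E (k+1) v) (Nout V E (k+2) v))
       \<and> card (Qk V E k v) \<le> card (Ebar E (Nin V E (k+1) v) (Nout V E 1 v))
       \<and> card (Rk V E k v) \<le> card (Ebar E (Nin V E 1 v) (Nin V E (k+2) v))
       \<and> card (Pk' V E k v) \<le> card (Ebar E (Nout V E 1 v) (Nout V E (k+2) v))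
       \<and> card (Qk' V E k v) \<le> card (Ebar E (Nout V E (k+1) v) (Nin V E 1 v))
       \<and> card (Rk' V E k v) = card (Eset E (Nin V E (k+2) v) (Nin V E (k+1) v))"
proof -
  have km: "k+3 \<le> m" using assms(1,6) by linarith
  show ?thesis
    using part_P[OF assms(2,3) km] part_Q[OF assms(2)] part_R[OF assms(2,5)]
      part_P'[OF assms(2,5)] part_Q'[OF assms(2)] part_R'[OF assms(2,3) km]
    by blast
qed

end
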